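(* Let $A$ be an evolution algebra with natural basis $B=\{e_i:i\in\Lambda\}$ and structure matrix $(\omega_{ki})$, and let $M$ be a modular ideal of $A$ with support $\Lambda_M$. Then: (i) for each $i\in\Lambda$, $e_i\in M$ if and only if $e_i^2\in M$; (ii) $M=\mathrm{lin}\{e_i:i\in\Lambda_M\}$; consequently $M$ is proper if and only if $\Lambda_M\neq\Lambda$; (iii) $\Lambda\setminus\Lambda_M$ is finite, and if $u$ is any modular unit for $M$ then $\Lambda_M\cup\Lambda_u=\Lambda$; (iv) if $M$ is proper, then $\omega_{ii}\neq 0$ for every $i\in\Lambda\setminus\Lambda_M$, the element $u_0=\sum_{i\in\Lambda\setminus\Lambda_M}\frac{1}{\omega_{ii}}e_i$ is a modular unit for $M$, and an element $u\in A$ is a modular unit for $M$ if and only if $u=m+u_0$ for some $m\in M$.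
   Context: An evolution algebra is an algebra $A$ over $\mathbb{K}\in\{\mathbb{R},\mathbb{C}\}$ with a basis $B=\{e_i:i\in\Lambda\}$ (natural basis) such that $e_ie_j=0$ for $i\neq j$; write $e_i^2=\sum_k\omega_{ki}e_k$. For $a=\sum_i\alpha_ie_i$, its support is $\Lambda_a=\{i:\alpha_i\neq 0\}$; for a nonempty $S\subseteq A$, $\Lambda_S=\bigcup_{a\in S}\Lambda_a$. An ideal $M$ of the (commutative) algebra $A$ is modular if there exists $u\in A$ (a modular unit for $M$) with $a-au\in M$ for all $a\in A$. *)

theory Defs
  imports Main "HOL-Library.Function_Algebras"
begin

text \<open>An evolution algebra with natural basis indexed by the type 'i (= Lambda)
 over a field 'k. Elements are finitely supported coordinate functions 'i => 'k;
 the element a = sum_i a_i e_i is represented by its coordinate function a.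
 The structure matrix is om, with om k i = omega_{ki}, i.e. e_i^2 = sum_k om k i e_k.\<close>

definition evo_carrier :: "('i \<Rightarrow> 'k::zero) set" where
  "evo_carrier = {a. finite {i. a i \<noteq> 0}}"

definition evo_supp :: "('i \<Rightarrow> 'k::zero) \<Rightarrow> 'i set" where
  "evo_supp a = {i. a i \<noteq> 0}"

definition evo_suppS :: "('i \<Rightarrow> 'k::zero) set \<Rightarrow> 'i set" where
  "evo_suppS S = (\<Union>a\<in>S. evo_supp a)"

definition evo_basis :: "'i \<Rightarrow> 'i \<Rightarrow> 'k::{zero,one}" where
  "evo_basis i = (\<lambda>j. if j = i then 1 else 0)"

definition evo_smult :: "'k::times \<Rightarrow> ('i \<Rightarrow> 'k) \<Rightarrow> 'i \<Rightarrow> 'k" where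
  "evo_smult c a = (\<lambda>j. c * a j)"

text \<open>Structure matrix of an evolution algebra: each e_i^2 must lie in the algebra,
 i.e. every column of om is finitely supported.\<close>
definition evolution_algebra :: "('i \<Rightarrow> 'i \<Rightarrow> 'k::field) \<Rightarrow> bool" where
  "evolution_algebra om \<longleftrightarrow> (\<forall>i. finite {k. om k i \<noteq> 0})"

definition evo_mult :: "('i \<Rightarrow> 'i \<Rightarrow> 'k::field) \<Rightarrow> ('i \<Rightarrow> 'k) \<Rightarrow> ('i \<Rightarrow> 'k) \<Rightarrow> 'i \<Rightarrow> 'k" where
  "evo_mult om a b = (\<lambda>k. \<Sum>i\<in>evo_supp a \<inter> evo_supp b. a i * b i * om k i)"

definition evo_lin :: "('i \<Rightarrow> 'k::field) set \<Rightarrow> ('i \<Rightarrow> 'k) set" where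
  "evo_lin S = {x. \<exists>F c. finite F \<and> F \<subseteq> S \<and> x = (\<Sum>v\<in>F. evo_smult (c v) v)}"

text \<open>Ideal of the (commutative) evolution algebra: a linear subspace absorbing products.\<close>
definition evo_ideal :: "('i \<Rightarrow> 'i \<Rightarrow> 'k::field) \<Rightarrow> ('i \<Rightarrow> 'k) set \<Rightarrow> bool" where
  "evo_ideal om M \<longleftrightarrow> M \<subseteq> evo_carrier \<and> 0 \<in> M
     \<and> (\<forall>x\<in>M. \<forall>y\<in>M. x + y \<in> M)
     \<and> (\<forall>c. \<forall>x\<in>M. evo_smult c x \<in> M)
     \<and> (\<forall>a\<in>evo_carrier. \<forall>x\<in>M. evo_mult om a x \<in> M)"

definition modular_unit :: "('i \<Rightarrow> 'i \<Rightarrow> 'k::field) \<Rightarrow> ('i \<Rightarrow> 'k) set \<Rightarrow> ('i \<Rightarrow> 'k) \<Rightarrow> bool" where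
  "modular_unit om M u \<longleftrightarrow> u \<in> evo_carrier \<and> (\<forall>a\<in>evo_carrier. a - evo_mult om a u \<in> M)"

definition modular_ideal :: "('i \<Rightarrow> 'i \<Rightarrow> 'k::field) \<Rightarrow> ('i \<Rightarrow> 'k) set \<Rightarrow> bool" where
  "modular_ideal om M \<longleftrightarrow> evo_ideal om M \<and> (\<exists>u. modular_unit om M u)"

end

theory Submission
  imports Defs
begin

lemma sum_fun_app: "(\<Sum>i\<in>S. f i) (j::'a) = (\<Sum>i\<in>S. f i j)"
  by (induction S rule: infinite_finite_induct) auto

lemma basis_carrier: "evo_basis i \<in> (evo_carrier :: ('i \<Rightarrow> 'k::field) set)"
  unfolding evo_carrier_def evo_basis_def
  by (rule CollectI, rule finite_subset[of _ "{i}"]) auto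

lemma supp_basis: "evo_supp (evo_basis i :: 'i \<Rightarrow> 'k::field) = {i}"
  unfolding evo_supp_def evo_basis_def by auto

lemma mult_F:
  assumes "finite F" "evo_supp a \<subseteq> F"
  shows "evo_mult om a b k = (\<Sum>i\<in>F. a i * b i * om k i)"
proof -
  have "evo_mult om a b k = (\<Sum>i\<in>evo_supp a \<inter> evo_supp b. a i * b i * om k i)"
    unfolding evo_mult_def by simp
  also have "\<dots> = (\<Sum>i\<in>F. a i * b i * om k i)"
    by (rule sum.mono_neutral_left) (use assms in \<open>auto simp: evo_supp_def\<close>)
  finally show ?thesis .
qed

lemma mult_add:
  assumes "a \<in> evo_carrier"
  shows "evo_mult om a (b + c) = evo_mult om a b + evo_mult om a c"
proof
  fix k
  have F: "finite (evo_supp a)" using assms by (simp add: evo_carrier_def evo_supp_def)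
  show "evo_mult om a (b + c) k = (evo_mult om a b + evo_mult om a c) k"
    by (simp add: mult_F[OF F] algebra_simps sum.distrib)
qed

lemma mult_diff:
  assumes "a \<in> evo_carrier"
  shows "evo_mult om a (b - c) = evo_mult om a b - evo_mult om a c"
proof
  fix k
  have F: "finite (evo_supp a)" using assms by (simp add: evo_carrier_def evo_supp_def)
  show "evo_mult om a (b - c) k = (evo_mult om a b - evo_mult om a c) k"
    by (simp add: mult_F[OF F] algebra_simps sum_subtractf)
qed

lemma mult_basis:
  "evo_mult om (evo_basis i) a = evo_smult (a i) (\<lambda>k. om k i)"
proof
  fix k
  show "evo_mult om (evo_basis i) a k = evo_smult (a i) (\<lambda>k. om k i) k"
    by (subst mult_F[of "{i}"]) (auto simp: evo_supp_def evo_smult_def evo_basis_def)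
qed

lemma expand:
  assumes "x \<in> evo_carrier"
  shows "x = (\<Sum>i\<in>evo_supp x. evo_smult (x i) (evo_basis i :: 'i \<Rightarrow> 'k::field))"
proof
  fix j
  have F: "finite (evo_supp x)" using assms by (simp add: evo_carrier_def evo_supp_def)
  have "(\<Sum>i\<in>evo_supp x. evo_smult (x i) (evo_basis i :: 'i \<Rightarrow> 'k)) j
      = (\<Sum>i\<in>evo_supp x. (if j = i then x i else 0))"
    by (simp add: sum_fun_app evo_smult_def evo_basis_def if_distrib cong: if_cong)
  also have "\<dots> = (if j \<in> evo_supp x then x j else 0)"
    using F by (simp add: sum.delta)
  also have "\<dots> = x j" by (auto simp: evo_supp_def)
  finally show "x j = (\<Sum>i\<in>evo_supp x. evo_smult (x i) (evo_basis i :: 'i \<Rightarrow> 'k)) j" by simp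
qed

lemma ideal_sum:
  assumes "evo_ideal om M" "finite S" "\<And>i. i \<in> S \<Longrightarrow> f i \<in> M"
  shows "(\<Sum>i\<in>S. f i) \<in> M"
  using assms(2,3)
proof (induction S rule: finite_induct)
  case empty then show ?case using assms(1) by (simp add: evo_ideal_def zero_fun_def)
next
  case (insert x F)
  then have "f x + sum f F \<in> M" using assms(1) by (auto simp: evo_ideal_def)
  then show ?case using insert(1,2) by (metis sum.insert)
qed

lemma smult_neg: "evo_smult (-1) x = - (x :: 'i \<Rightarrow> 'k::field)"
  by (auto simp: evo_smult_def fun_eq_iff)

lemma ideal_diff:
  assumes "evo_ideal om M" "x \<in> M" "y \<in> M" shows "x - y \<in> M"
proof -
  have "evo_smult (-1) y \<in> M" using assms by (simp add: evo_ideal_def)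
  then have "x + evo_smult (-1) y \<in> M" using assms by (simp add: evo_ideal_def)
  then show ?thesis by (simp add: smult_neg)
qed

lemma smult_smult: "evo_smult a (evo_smult b x) = evo_smult (a * b) (x :: 'i \<Rightarrow> 'k::field)"
  by (auto simp: evo_smult_def fun_eq_iff)

lemma smult_one: "evo_smult 1 x = (x :: 'i \<Rightarrow> 'k::field)"
  by (auto simp: evo_smult_def fun_eq_iff)

lemma in_suppS: "x \<in> M \<Longrightarrow> x i \<noteq> 0 \<Longrightarrow> i \<in> evo_suppS M"
  by (auto simp: evo_suppS_def evo_supp_def)

theorem theorem3p2:
  fixes om :: "'i \<Rightarrow> 'i \<Rightarrow> 'k::field" and M :: "('i \<Rightarrow> 'k) set"
  assumes evo: "evolution_algebra om"
    and modM: "modular_ideal om M"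
  shows
    "(\<forall>i. evo_basis i \<in> M \<longleftrightarrow> evo_mult om (evo_basis i) (evo_basis i) \<in> M)
   \<and> M = evo_lin (evo_basis ` evo_suppS M)
   \<and> (M \<noteq> evo_carrier \<longleftrightarrow> evo_suppS M \<noteq> UNIV)
   \<and> finite (- evo_suppS M)
   \<and> (\<forall>u. modular_unit om M u \<longrightarrow> evo_suppS M \<union> evo_supp u = UNIV)
   \<and> (M \<noteq> evo_carrier \<longrightarrow>
        (\<forall>i\<in>- evo_suppS M. om i i \<noteq> 0)
      \<and> modular_unit om M (\<Sum>i\<in>- evo_suppS M. evo_smult (1 / om i i) (evo_basis i))
      \<and> (\<forall>u. modular_unit om M u \<longleftrightarrow>
            (\<exists>m\<in>M. u = m + (\<Sum>i\<in>- evo_suppS M. evo_smult (1 / om i i) (evo_basis i)))))"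
proof -
  have I: "evo_ideal om M" using modM by (simp add: modular_ideal_def)
  obtain u where U: "modular_unit om M u" using modM by (auto simp: modular_ideal_def)
  have sub: "M \<subseteq> evo_carrier" and zero: "0 \<in> M"
    and add: "\<And>x y. x \<in> M \<Longrightarrow> y \<in> M \<Longrightarrow> x + y \<in> M"
    and sm: "\<And>c x. x \<in> M \<Longrightarrow> evo_smult c x \<in> M"
    and ab: "\<And>a x. a \<in> evo_carrier \<Longrightarrow> x \<in> M \<Longrightarrow> evo_mult om a x \<in> M"
    using I by (auto simp: evo_ideal_def)
  define col where "col i = (\<lambda>k. om k i)" for i
  have eu: "\<And>v i. modular_unit om M v \<Longrightarrow> evo_basis i - evo_smult (v i) (col i) \<in> M"
  proof -
    fix v i assume "modular_unit om M v"
    then have h: "\<forall>a\<in>evo_carrier. a - evo_mult om a v \<in> M"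
      unfolding modular_unit_def by (rule conjunct2)
    have "evo_basis i - evo_mult om (evo_basis i) v \<in> M"
      by (rule bspec[OF h basis_carrier])
    then show "evo_basis i - evo_smult (v i) (col i) \<in> M"
      by (simp only: mult_basis col_def)
  qed
  have colM: "col i \<in> M \<Longrightarrow> evo_basis i \<in> M" for i
  proof -
    assume c: "col i \<in> M"
    have "evo_basis i - evo_smult (u i) (col i) + evo_smult (u i) (col i) \<in> M"
      using add[OF eu[OF U] sm[OF c]] .
    then show ?thesis by simp
  qed
  have sq: "evo_mult om (evo_basis i) (evo_basis i) = col i" for i
  proof -
    have "evo_basis i i = (1::'k)" by (simp add: evo_basis_def)
    then show ?thesis by (simp add: mult_basis col_def smult_one)
  qed
  have part1: "\<forall>i. evo_basis i \<in> M \<longleftrightarrow> evo_mult om (evo_basis i) (evo_basis i) \<in> M"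
  proof (intro allI iffI)
    fix i assume "evo_basis i \<in> M"
    then show "evo_mult om (evo_basis i) (evo_basis i) \<in> M" by (rule ab[OF basis_carrier])
  next
    fix i assume "evo_mult om (evo_basis i) (evo_basis i) \<in> M"
    then show "evo_basis i \<in> M" unfolding sq by (rule colM)
  qed
  have suppM: "i \<in> evo_suppS M \<Longrightarrow> evo_basis i \<in> M" for i
  proof -
    assume "i \<in> evo_suppS M"
    then obtain x where x: "x \<in> M" "x i \<noteq> 0" by (auto simp: evo_suppS_def evo_supp_def)
    have "evo_smult (x i) (col i) \<in> M"
      using ab[OF basis_carrier x(1)] by (simp add: mult_basis col_def)
    then have "evo_smult (1 / x i) (evo_smult (x i) (col i)) \<in> M" by (rule sm)
    then have "col i \<in> M" using x(2) by (simp add: smult_smult smult_one)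
    then show ?thesis by (rule colM)
  qed
  have carrM: "x \<in> evo_carrier \<Longrightarrow> evo_supp x \<subseteq> evo_suppS M \<Longrightarrow> x \<in> M" for x
  proof -
    assume x: "x \<in> evo_carrier" "evo_supp x \<subseteq> evo_suppS M"
    have F: "finite (evo_supp x)" using x by (simp add: evo_carrier_def evo_supp_def)
    have "(\<Sum>i\<in>evo_supp x. evo_smult (x i) (evo_basis i :: 'i \<Rightarrow> 'k)) \<in> M"
      by (rule ideal_sum[OF I F]) (use x suppM sm in auto)
    then show ?thesis using expand[OF x(1)] by simp
  qed
  have suppMx: "x \<in> M \<Longrightarrow> evo_supp x \<subseteq> evo_suppS M" for x
    by (auto simp: evo_suppS_def)
  have inj: "inj (evo_basis :: 'i \<Rightarrow> 'i \<Rightarrow> 'k)"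
  proof (rule injI)
    fix x y assume "(evo_basis x :: 'i \<Rightarrow> 'k) = evo_basis y"
    then have "(evo_basis x :: 'i \<Rightarrow> 'k) x = evo_basis y x" by simp
    then show "x = y" by (simp add: evo_basis_def split: if_splits)
  qed
  have part2: "M = evo_lin (evo_basis ` evo_suppS M)"
  proof
    show "M \<subseteq> evo_lin (evo_basis ` evo_suppS M)"
    proof
      fix x assume x: "x \<in> M"
      then have xc: "x \<in> evo_carrier" using sub by auto
      have F: "finite (evo_supp x)" using xc by (simp add: evo_carrier_def evo_supp_def)
      define c where "c v = x (inv evo_basis v)" for v :: "'i \<Rightarrow> 'k"
      have "(\<Sum>v\<in>evo_basis ` evo_supp x. evo_smult (c v) v)
          = (\<Sum>i\<in>evo_supp x. evo_smult (c (evo_basis i)) (evo_basis i))"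
        by (rule sum.reindex[unfolded comp_def]) (use inj in \<open>auto simp: inj_on_def inj_def\<close>)
      also have "\<dots> = x" using expand[OF xc] by (simp add: c_def inv_f_f[OF inj])
      finally show "x \<in> evo_lin (evo_basis ` evo_suppS M)"
        unfolding evo_lin_def using F suppMx[OF x]
        by (intro CollectI exI[of _ "evo_basis ` evo_supp x"] exI[of _ c]) auto
    qed
  next
    show "evo_lin (evo_basis ` evo_suppS M) \<subseteq> M"
    proof
      fix x :: "'i \<Rightarrow> 'k" assume "x \<in> evo_lin (evo_basis ` evo_suppS M)"
      then obtain F c where F: "finite F" "F \<subseteq> evo_basis ` evo_suppS M"
        "x = (\<Sum>v\<in>F. evo_smult (c v) v)" by (auto simp: evo_lin_def)
      show "x \<in> M" unfolding F(3)
      proof (rule ideal_sum[OF I F(1)])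
        fix v assume "v \<in> F"
        then obtain i where "i \<in> evo_suppS M" "v = evo_basis i" using F(2) by auto
        then show "evo_smult (c v) v \<in> M" using suppM sm by simp
      qed
    qed
  qed
  have part3: "M \<noteq> evo_carrier \<longleftrightarrow> evo_suppS M \<noteq> UNIV"
  proof
    assume "M \<noteq> evo_carrier"
    then show "evo_suppS M \<noteq> UNIV" using carrM sub by blast
  next
    assume "evo_suppS M \<noteq> UNIV"
    then obtain i where "i \<notin> evo_suppS M" by auto
    moreover have "evo_basis i i = (1::'k)" by (simp add: evo_basis_def)
    ultimately have "evo_basis i \<notin> M" using in_suppS[of "evo_basis i" M i] by auto
    moreover have "(evo_basis i :: 'i \<Rightarrow> 'k) \<in> evo_carrier" by (rule basis_carrier)
    ultimately show "M \<noteq> evo_carrier" by auto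
  qed
  have key: "\<And>v i. modular_unit om M v \<Longrightarrow> i \<notin> evo_suppS M \<Longrightarrow> v i * om i i = 1"
  proof -
    fix v i assume v: "modular_unit om M v" and i: "i \<notin> evo_suppS M"
    have "(evo_basis i - evo_smult (v i) (col i)) i = 0"
      using in_suppS[OF eu[OF v]] i by blast
    then show "v i * om i i = 1" by (simp add: evo_basis_def evo_smult_def col_def)
  qed
  have part5: "\<forall>v. modular_unit om M v \<longrightarrow> evo_suppS M \<union> evo_supp v = UNIV"
  proof (intro allI impI)
    fix v assume v: "modular_unit om M v"
    show "evo_suppS M \<union> evo_supp v = UNIV"
    proof (rule ccontr)
      assume "evo_suppS M \<union> evo_supp v \<noteq> UNIV"
      then obtain i where "i \<notin> evo_suppS M" "v i = 0" by (auto simp: evo_supp_def)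
      then show False using key[OF v] by force
    qed
  qed
  have part4: "finite (- evo_suppS M)"
  proof -
    have "- evo_suppS M \<subseteq> evo_supp u" using part5 U by blast
    moreover have "finite (evo_supp u)" using U by (simp add: modular_unit_def evo_carrier_def evo_supp_def)
    ultimately show ?thesis by (rule finite_subset)
  qed
  define S where "S = - evo_suppS M"
  define u0 where "u0 = (\<Sum>i\<in>S. evo_smult (1 / om i i) (evo_basis i :: 'i \<Rightarrow> 'k))"
  have u0j: "u0 j = (if j \<in> S then 1 / om j j else 0)" for j
  proof -
    have "u0 j = (\<Sum>i\<in>S. (if j = i then 1 / om i i else 0))"
      by (simp add: u0_def sum_fun_app evo_smult_def evo_basis_def if_distrib cong: if_cong)
    also have "\<dots> = (if j \<in> S then 1 / om j j else 0)"
      using part4 by (simp add: S_def sum.delta)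
    finally show ?thesis .
  qed
  have u0c: "u0 \<in> evo_carrier"
    unfolding evo_carrier_def
    by (rule CollectI, rule finite_subset[of _ S]) (use part4 u0j in \<open>auto simp: S_def\<close>)
  have carr_add: "x \<in> evo_carrier \<Longrightarrow> y \<in> evo_carrier \<Longrightarrow> x + y \<in> evo_carrier"
    for x y :: "'i \<Rightarrow> 'k"
    unfolding evo_carrier_def
    by (rule CollectI, rule finite_subset[of _ "{i. x i \<noteq> 0} \<union> {i. y i \<noteq> 0}"]) auto
  have carr_diff: "x \<in> evo_carrier \<Longrightarrow> y \<in> evo_carrier \<Longrightarrow> x - y \<in> evo_carrier"
    for x y :: "'i \<Rightarrow> 'k"
    unfolding evo_carrier_def
    by (rule CollectI, rule finite_subset[of _ "{i. x i \<noteq> 0} \<union> {i. y i \<noteq> 0}"]) auto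
  have diffM: "\<And>v. modular_unit om M v \<Longrightarrow> v - u0 \<in> M"
  proof -
    fix v assume v: "modular_unit om M v"
    have vc: "v \<in> evo_carrier" using v by (simp add: modular_unit_def)
    show "v - u0 \<in> M"
    proof (rule carrM)
      show "v - u0 \<in> evo_carrier" using carr_diff[OF vc u0c] .
      show "evo_supp (v - u0) \<subseteq> evo_suppS M"
      proof
        fix j assume j: "j \<in> evo_supp (v - u0)"
        show "j \<in> evo_suppS M"
        proof (rule ccontr)
          assume nj: "j \<notin> evo_suppS M"
          have "v j * om j j = 1" using key[OF v nj] .
          then have "v j = 1 / om j j" by (metis mult_cancel_left1 nonzero_eq_divide_eq mult.commute zero_neq_one mult_zero_right)
          then have "(v - u0) j = 0" using nj by (simp add: u0j S_def)
          then show False using j by (simp add: evo_supp_def)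
        qed
      qed
    qed
  qed
  have u0mod: "modular_unit om M u0"
    unfolding modular_unit_def
  proof (intro conjI ballI)
    show "u0 \<in> evo_carrier" by (rule u0c)
    fix a :: "'i \<Rightarrow> 'k" assume a: "a \<in> evo_carrier"
    have "a - evo_mult om a u + evo_mult om a (u - u0) \<in> M"
      using add[OF _ ab[OF a diffM[OF U]]] U a by (simp add: modular_unit_def)
    then show "a - evo_mult om a u0 \<in> M" by (simp add: mult_diff[OF a])
  qed
  have part6: "\<forall>v. modular_unit om M v \<longleftrightarrow> (\<exists>m\<in>M. v = m + u0)"
  proof (intro allI iffI)
    fix v assume "modular_unit om M v"
    then show "\<exists>m\<in>M. v = m + u0" using diffM by (intro bexI[of _ "v - u0"]) auto
  next
    fix v assume "\<exists>m\<in>M. v = m + u0"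
    then obtain m where m: "m \<in> M" "v = m + u0" by auto
    show "modular_unit om M v"
      unfolding modular_unit_def
    proof (intro conjI ballI)
      show "v \<in> evo_carrier" using carr_add[OF _ u0c] m sub by auto
      fix a :: "'i \<Rightarrow> 'k" assume a: "a \<in> evo_carrier"
      have "a - evo_mult om a u0 - evo_mult om a m \<in> M"
        using ideal_diff[OF I _ ab[OF a m(1)]] u0mod a by (simp add: modular_unit_def)
      then show "a - evo_mult om a v \<in> M" by (simp add: m(2) mult_add[OF a] algebra_simps)
    qed
  qed
  have omnz: "\<forall>i\<in>- evo_suppS M. om i i \<noteq> 0" using key[OF U] by force
  note a = u0mod[unfolded u0_def S_def] part6[unfolded u0_def S_def]
  show ?thesis
    apply (intro conjI impI)
    apply (rule part1) apply (rule part2) apply (rule part3) apply (rule part4)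
    apply (rule part5) apply (rule omnz) apply (rule a(1)) apply (rule a(2))
    done
qed

end
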